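(* Let $\Omega\subseteq\mathbb{R}^2$ be a compact domain, $r_d>0$, $a_I>0$, $a_h>0$, $a_v>0$, and let $c_r>0$ be a collision radius. Consider $N$ vehicles with dynamics $\dot p_i=v_i$, $\dot v_i=u_i$ and control law (applied without thresholding) $$u_i=-\sum_{j\neq i}\nabla_i V_I(p_{ij})-\nabla_i V_h(p_i)-a_v v_i.$$ Let $$\Phi=\frac12\sum_{i=1}^N\Bigl(\dot p_i\cdot\dot p_i+\sum_{j\ne i}V_I(p_{ij})+2V_h(p_i)\Bigr).$$ If the initial configuration satisfies $$\Phi(0)<\int_{r_d}^{c_r}f_I(s)\,ds=\frac{a_I}{2}(c_r-r_d)^2,$$ then no vehicle collision occurs for any $t\ge0$, i.e., $\|p_i(t)-p_j(t)\|>c_r$ for all $i\neq j$ and all $t\ge 0$.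
   Context: $p_{ij}:=p_i-p_j$; $P_{\partial\Omega}(x)$ is the closest point of $\partial\Omega$ to $x$ and the signed distance of $x$ from $\partial\Omega$ is positive outside $\Omega$, negative inside. $f_I(r)=a_I(r-r_d)$ for $0\le r<r_d$ and $f_I(r)=0$ for $r\ge r_d$. $V_I(x)=\frac{a_I}{2}(\|x\|-r_d)^2$ for $\|x\|<r_d$, $V_I(x)=0$ otherwise; $V_h(x)=0$ if the signed distance of $x$ to $\partial\Omega$ is $\le -\frac{r_d}{2}$ and $V_h(x)=\frac{a_h}{2}(\text{signed distance}+\frac{r_d}{2})^2$ otherwise. A collision between vehicles $i$ and $j$ means $\|p_i-p_j\|\le c_r$. *)

theory Defs
  imports "HOL-Analysis.Analysis"
begin

type_synonym vec2 = "real ^ 2"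

definition fI :: "real \<Rightarrow> real \<Rightarrow> real \<Rightarrow> real" where
  "fI aI rd r = (if r < rd then aI * (r - rd) else 0)"

definition VI :: "real \<Rightarrow> real \<Rightarrow> vec2 \<Rightarrow> real" where
  "VI aI rd x = (if norm x < rd then aI / 2 * (norm x - rd)^2 else 0)"

text \<open>Gradient of V_I (for x \<noteq> 0): f_I(norm x) times the unit vector x / norm x.\<close>
definition gradVI :: "real \<Rightarrow> real \<Rightarrow> vec2 \<Rightarrow> vec2" where
  "gradVI aI rd x = (fI aI rd (norm x) / norm x) *\<^sub>R x"

definition signed_dist :: "vec2 set \<Rightarrow> vec2 \<Rightarrow> real" where
  "signed_dist \<Omega> x = (if x \<in> \<Omega> then - infdist x (frontier \<Omega>) else infdist x (frontier \<Omega>))"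

definition Vh :: "vec2 set \<Rightarrow> real \<Rightarrow> real \<Rightarrow> vec2 \<Rightarrow> real" where
  "Vh \<Omega> ah rd x = (if signed_dist \<Omega> x \<le> - rd / 2 then 0
                     else ah / 2 * (signed_dist \<Omega> x + rd / 2)^2)"

definition Phi :: "nat \<Rightarrow> vec2 set \<Rightarrow> real \<Rightarrow> real \<Rightarrow> real \<Rightarrow>
    (nat \<Rightarrow> real \<Rightarrow> vec2) \<Rightarrow> (nat \<Rightarrow> real \<Rightarrow> vec2) \<Rightarrow> real \<Rightarrow> real" where
  "Phi N \<Omega> rd aI ah p v t = 1/2 * (\<Sum>i<N. v i t \<bullet> v i t
      + (\<Sum>j\<in>{..<N} - {i}. VI aI rd (p i t - p j t)) + 2 * Vh \<Omega> ah rd (p i t))"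

end

theory Submission imports Defs begin

definition Gf :: "real \<Rightarrow> real \<Rightarrow> real \<Rightarrow> real" where
  "Gf aI rd r = aI / 2 * (min (r - rd) 0)^2"

lemma minsq_deriv: "((\<lambda>s::real. (min s 0)^2) has_real_derivative 2 * min s 0) (at s)"
proof (cases "s < 0")
  case True
  have "((\<lambda>s::real. s^2) has_real_derivative 2 * s) (at s)"
    by (auto intro!: derivative_eq_intros)
  moreover have "2 * s = 2 * min s 0" using True by linarith
  ultimately have "((\<lambda>s::real. s^2) has_real_derivative 2 * min s 0) (at s)" by metis
  then show ?thesis
  proof (rule has_field_derivative_transform_within_open[where S="{..<0}"])
    show "open {..<(0::real)}" by simp
    show "s \<in> {..<0}" using True by simp
    fix x :: real assume "x \<in> {..<0}"
    then have "min x 0 = x" by simp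
    then show "x^2 = (min x 0)^2" by simp
  qed
next
  case False
  show ?thesis
  proof (cases "s > 0")
    case True
    have "((\<lambda>s::real. 0) has_real_derivative 0) (at s)"
      by (auto intro!: derivative_eq_intros)
    moreover have "0 = 2 * min s 0" using True by linarith
    ultimately have "((\<lambda>s::real. 0) has_real_derivative 2 * min s 0) (at s)" by metis
    then show ?thesis
    proof (rule has_field_derivative_transform_within_open[where S="{0<..}"])
      show "open {(0::real)<..}" by simp
      show "s \<in> {0<..}" using True by simp
      fix x :: real assume "x \<in> {0<..}"
      then have "min x 0 = 0" by simp
      then show "0 = (min x 0)^2" by simp
    qed
  next
    case False2: False
    then have s0: "s = 0" using False by auto
    have "\<exists>g. (\<forall>z. (min z 0)^2 - (min s 0)^2 = g z * (z - s)) \<and> isCont g s \<and> g s = 2 * min s 0"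
    proof (rule exI[of _ "\<lambda>z. min z 0"], intro conjI allI)
      show "isCont (\<lambda>z::real. min z 0) s" by (intro continuous_intros)
    qed (auto simp: s0 power2_eq_square min_def)
    then show ?thesis by (simp add: CARAT_DERIV)
  qed
qed

lemma fI_min: "fI aI rd r = aI * min (r - rd) 0"
  by (simp add: fI_def min_def)

lemma Gf_deriv: "(Gf aI rd has_real_derivative fI aI rd r) (at r)"
proof -
  have "((\<lambda>r. aI / 2 * (min (r - rd) 0)^2) has_real_derivative aI / 2 * (2 * min (r - rd) 0 * 1)) (at r)"
    by (rule DERIV_cmult, rule DERIV_chain2[OF minsq_deriv]) (auto intro!: derivative_eq_intros)
  then show ?thesis by (simp add: Gf_def[abs_def] fI_min)
qed

lemma VI_Gf: "VI aI rd x = Gf aI rd (norm x)"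
  by (simp add: VI_def Gf_def min_def)

lemma Gf_nonneg: "aI > 0 \<Longrightarrow> Gf aI rd r \<ge> 0"
  by (simp add: Gf_def)

lemma Gf_antimono: "aI > 0 \<Longrightarrow> r \<le> s \<Longrightarrow> Gf aI rd s \<le> Gf aI rd r"
proof -
  assume a: "aI > 0" "r \<le> s"
  have "(- min (s - rd) 0)^2 \<le> (- min (r - rd) 0)^2"
    by (rule power_mono) (use a in \<open>auto simp: min_def\<close>)
  then have "(min (s - rd) 0)^2 \<le> (min (r - rd) 0)^2" by simp
  then show ?thesis unfolding Gf_def using a by (simp add: mult_left_mono)
qed

lemma VI_deriv:
  assumes "x \<noteq> 0"
  shows "(VI aI rd has_derivative (\<lambda>h. gradVI aI rd x \<bullet> h)) (at x)"
proof -
  have "((\<lambda>x. Gf aI rd (norm x)) has_derivative (\<lambda>h. fI aI rd (norm x) * (h \<bullet> sgn x))) (at x)"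
    using has_derivative_compose[OF has_derivative_norm[OF assms] Gf_deriv[unfolded has_field_derivative_def]]
    by (simp add: mult.commute)
  moreover have "(\<lambda>h. fI aI rd (norm x) * (h \<bullet> sgn x)) = (\<lambda>h. gradVI aI rd x \<bullet> h)"
    by (auto simp: gradVI_def sgn_div_norm inner_commute divide_inverse mult_ac)
  ultimately show ?thesis by (simp add: VI_Gf[abs_def])
qed

lemma gradVI_0: "gradVI aI rd 0 = 0" by (simp add: gradVI_def)
lemma gradVI_neg: "gradVI aI rd (- x) = - gradVI aI rd x" by (simp add: gradVI_def)

lemma VI_cont: "continuous_on UNIV (VI aI rd)"
proof -
  have "continuous_on UNIV (\<lambda>x. aI / 2 * (min (norm x - rd) 0)^2)"
    by (intro continuous_intros)
  then show ?thesis by (simp add: VI_Gf[abs_def] Gf_def)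
qed

lemma integral_val: "(LBINT s=ereal rd..ereal cr. fI aI rd s) = Gf aI rd cr"
proof -
  have "(LBINT s=ereal rd..ereal cr. fI aI rd s) = Gf aI rd cr - Gf aI rd rd"
    by (rule interval_integral_FTC_finite)
      (auto simp: fI_min has_real_derivative_iff_has_vector_derivative[symmetric]
         intro!: continuous_intros has_field_derivative_at_within Gf_deriv[unfolded fI_min])
  then show ?thesis by (simp add: Gf_def)
qed


lemma antisym_sum:
  fixes g :: "nat \<Rightarrow> nat \<Rightarrow> vec2" and w :: "nat \<Rightarrow> vec2"
  assumes anti: "\<And>i j. g j i = - g i j"
  shows "(\<Sum>i<N. \<Sum>j\<in>{..<N}-{i}. g i j \<bullet> w i + g i j \<bullet> w j) = 0"
proof -
  have gii: "g i i = 0" for i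
  proof -
    have "(2::real) *\<^sub>R g i i = g i i + g i i" by (rule scaleR_2)
    also have "\<dots> = g i i + - g i i" using anti[of i i] by metis
    finally show ?thesis by simp
  qed
  have inner: "(\<Sum>j\<in>{..<N}-{i}. g i j \<bullet> w i + g i j \<bullet> w j) = (\<Sum>j<N. g i j \<bullet> w i + g i j \<bullet> w j)" if "i < N" for i
    using sum.remove[of "{..<N}" i "\<lambda>j. g i j \<bullet> w i + g i j \<bullet> w j"] that by (simp add: gii)
  have "(\<Sum>i<N. \<Sum>j\<in>{..<N}-{i}. g i j \<bullet> w i + g i j \<bullet> w j) = (\<Sum>i<N. \<Sum>j<N. g i j \<bullet> w i + g i j \<bullet> w j)"
    by (rule sum.cong[OF refl]) (simp add: inner)
  also have "\<dots> = (\<Sum>i<N. \<Sum>j<N. g i j \<bullet> w i) + (\<Sum>i<N. \<Sum>j<N. g i j \<bullet> w j)"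
    by (simp add: sum.distrib)
  also have "(\<Sum>i<N. \<Sum>j<N. g i j \<bullet> w j) = (\<Sum>j<N. \<Sum>i<N. g i j \<bullet> w j)"
    by (rule sum.swap)
  also have "\<dots> = (\<Sum>j<N. \<Sum>i<N. - (g j i \<bullet> w j))"
    by (intro sum.cong refl) (metis anti inner_minus_left)
  also have "\<dots> = - (\<Sum>i<N. \<Sum>j<N. g i j \<bullet> w i)"
    by (simp add: sum_negf)
  finally show ?thesis by simp
qed

lemma T_deriv:
  assumes gradh: "(Vh \<Omega> ah rd has_derivative (\<lambda>h. gh \<bullet> h)) (at (p i t))"
    and posk: "\<And>k. k < N \<Longrightarrow> (p k has_vector_derivative v k t) (at t within S)"
    and veli: "(v i has_vector_derivative dv) (at t within S)"
    and ne: "\<And>j. j < N \<Longrightarrow> j \<noteq> i \<Longrightarrow> p i t \<noteq> p j t"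
    and iN: "i < N"
  shows "((\<lambda>s. v i s \<bullet> v i s + (\<Sum>j\<in>{..<N}-{i}. VI aI rd (p i s - p j s)) + 2 * Vh \<Omega> ah rd (p i s))
     has_derivative (\<lambda>h. h * (2 * (v i t \<bullet> dv) + (\<Sum>j\<in>{..<N}-{i}. gradVI aI rd (p i t - p j t) \<bullet> (v i t - v j t))
        + 2 * (gh \<bullet> v i t)))) (at t within S)"
proof -
  have vd: "(v i has_derivative (\<lambda>h. h *\<^sub>R dv)) (at t within S)"
    using veli by (simp add: has_vector_derivative_def)
  have pd: "(p k has_derivative (\<lambda>h. h *\<^sub>R v k t)) (at t within S)" if "k < N" for k
    using posk[OF that] by (simp add: has_vector_derivative_def)
  have d1: "((\<lambda>s. v i s \<bullet> v i s) has_derivative (\<lambda>h. h * (2 * (v i t \<bullet> dv)))) (at t within S)"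
    by (rule has_derivative_eq_rhs[OF has_derivative_inner[OF vd vd]])
       (auto simp: inner_commute algebra_simps)
  have d2: "((\<lambda>s. VI aI rd (p i s - p j s)) has_derivative
      (\<lambda>h. h * (gradVI aI rd (p i t - p j t) \<bullet> (v i t - v j t)))) (at t within S)"
    if "j \<in> {..<N}-{i}" for j
  proof -
    have pij: "((\<lambda>s. p i s - p j s) has_derivative (\<lambda>h. h *\<^sub>R v i t - h *\<^sub>R v j t)) (at t within S)"
      using that iN by (intro has_derivative_diff pd) auto
    have "p i t - p j t \<noteq> 0" using ne[of j] that by auto
    from has_derivative_compose[OF pij VI_deriv[OF this]] show ?thesis
      by (rule has_derivative_eq_rhs) (auto simp: algebra_simps inner_diff_right)
  qed
  have d2s: "((\<lambda>s. \<Sum>j\<in>{..<N}-{i}. VI aI rd (p i s - p j s)) has_derivative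
      (\<lambda>h. h * (\<Sum>j\<in>{..<N}-{i}. gradVI aI rd (p i t - p j t) \<bullet> (v i t - v j t)))) (at t within S)"
    by (rule has_derivative_eq_rhs[OF has_derivative_sum[OF d2]]) (auto simp: sum_distrib_left)
  have d3: "((\<lambda>s. 2 * Vh \<Omega> ah rd (p i s)) has_derivative (\<lambda>h. h * (2 * (gh \<bullet> v i t)))) (at t within S)"
    by (rule has_derivative_eq_rhs[OF has_derivative_mult_right[OF has_derivative_compose[OF pd[OF iN] gradh]]])
      (auto simp: algebra_simps)
  show ?thesis
    by (rule has_derivative_eq_rhs[OF has_derivative_add[OF has_derivative_add[OF d1 d2s] d3]])
      (auto simp: algebra_simps)
qed


lemma D_alg:
  fixes g :: "nat \<Rightarrow> nat \<Rightarrow> vec2"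
  shows "2 * (v i \<bullet> (- (\<Sum>j\<in>{..<N}-{i}. g i j) - gh i - av *\<^sub>R v i))
     + (\<Sum>j\<in>{..<N}-{i}. g i j \<bullet> (v i - v j)) + 2 * (gh i \<bullet> v i)
   = - (\<Sum>j\<in>{..<N}-{i}. g i j \<bullet> v i + g i j \<bullet> v j) - 2 * av * (v i \<bullet> v i)"
  by (simp add: inner_diff_right inner_sum_right inner_sum_left sum.distrib sum_subtractf
      inner_commute algebra_simps)

lemma Phi_deriv:
  fixes \<Omega> :: "vec2 set" and p v gh :: "nat \<Rightarrow> real \<Rightarrow> vec2"
  assumes grad_h: "\<And>i. i < N \<Longrightarrow>
        (Vh \<Omega> ah rd has_derivative (\<lambda>h. gh i t \<bullet> h)) (at (p i t))"
    and pos: "\<And>i. i < N \<Longrightarrow> (p i has_vector_derivative v i t) (at t within S)"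
    and vel: "\<And>i. i < N \<Longrightarrow>
        (v i has_vector_derivative
           (- (\<Sum>j\<in>{..<N} - {i}. gradVI aI rd (p i t - p j t)) - gh i t - av *\<^sub>R v i t))
        (at t within S)"
    and ne: "\<And>i j. i < N \<Longrightarrow> j < N \<Longrightarrow> i \<noteq> j \<Longrightarrow> p i t \<noteq> p j t"
  shows "((\<lambda>s. Phi N \<Omega> rd aI ah p v s) has_real_derivative (- av * (\<Sum>i<N. v i t \<bullet> v i t))) (at t within S)"
proof -
  let ?g = "\<lambda>i j. gradVI aI rd (p i t - p j t)"
  let ?dv = "\<lambda>i. - (\<Sum>j\<in>{..<N} - {i}. ?g i j) - gh i t - av *\<^sub>R v i t"
  let ?D = "\<lambda>i. 2 * (v i t \<bullet> ?dv i) + (\<Sum>j\<in>{..<N}-{i}. ?g i j \<bullet> (v i t - v j t)) + 2 * (gh i t \<bullet> v i t)"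
  have Ti: "((\<lambda>s. v i s \<bullet> v i s + (\<Sum>j\<in>{..<N}-{i}. VI aI rd (p i s - p j s)) + 2 * Vh \<Omega> ah rd (p i s))
     has_derivative (\<lambda>h. h * ?D i)) (at t within S)" if "i \<in> {..<N}" for i
    using that by (intro T_deriv[where gh="gh i t"] grad_h pos vel ne) auto
  have A: "((\<lambda>s. Phi N \<Omega> rd aI ah p v s) has_derivative (\<lambda>h. 1/2 * (\<Sum>i<N. h * ?D i))) (at t within S)"
    unfolding Phi_def by (intro has_derivative_mult_right has_derivative_sum Ti)
  have B: "(\<lambda>h. 1/2 * (\<Sum>i<N. h * ?D i)) = (\<lambda>h. (- av * (\<Sum>i<N. v i t \<bullet> v i t)) * h)"
  proof -
    have anti: "?g j i = - ?g i j" for i j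
      by (metis gradVI_neg minus_diff_eq)
    have "(\<Sum>i<N. ?D i) = (\<Sum>i<N. - (\<Sum>j\<in>{..<N}-{i}. ?g i j \<bullet> v i t + ?g i j \<bullet> v j t) - 2 * av * (v i t \<bullet> v i t))"
      by (rule sum.cong[OF refl]) (rule D_alg)
    also have "\<dots> = - (\<Sum>i<N. \<Sum>j\<in>{..<N}-{i}. ?g i j \<bullet> v i t + ?g i j \<bullet> v j t) - 2 * av * (\<Sum>i<N. v i t \<bullet> v i t)"
      by (simp add: sum_subtractf sum_negf sum_distrib_left)
    also have "(\<Sum>i<N. \<Sum>j\<in>{..<N}-{i}. ?g i j \<bullet> v i t + ?g i j \<bullet> v j t) = 0"
      by (rule antisym_sum[where g="?g" and w="\<lambda>i. v i t"]) (rule anti)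
    finally have "(\<Sum>i<N. ?D i) = - 2 * av * (\<Sum>i<N. v i t \<bullet> v i t)" by simp
    then show ?thesis by (auto simp: sum_distrib_left[symmetric] mult_ac)
  qed
  show ?thesis using has_derivative_eq_rhs[OF A B] unfolding has_field_derivative_def .
qed

lemma Phi_lower:
  assumes "aI > 0" "ah > 0" "i < N" "j < N" "i \<noteq> j"
  shows "VI aI rd (p i t - p j t) \<le> Phi N \<Omega> rd aI ah p v t"
proof -
  define T where "T k = v k t \<bullet> v k t + (\<Sum>l\<in>{..<N}-{k}. VI aI rd (p k t - p l t)) + 2 * Vh \<Omega> ah rd (p k t)" for k
  have VI0: "VI aI rd x \<ge> 0" for x using Gf_nonneg[OF assms(1)] by (simp add: VI_Gf)
  have Vh0: "Vh \<Omega> ah rd x \<ge> 0" for x unfolding Vh_def using assms(2) by auto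
  have Tl: "T k \<ge> VI aI rd (p k t - p l t)" if "l \<in> {..<N}-{k}" for k l
  proof -
    have "VI aI rd (p k t - p l t) \<le> (\<Sum>l\<in>{..<N}-{k}. VI aI rd (p k t - p l t))"
      by (rule member_le_sum) (use that VI0 in auto)
    moreover have "0 \<le> v k t \<bullet> v k t" by simp
    ultimately show ?thesis unfolding T_def using Vh0[of "p k t"] by linarith
  qed
  have T0: "T k \<ge> 0" for k
    unfolding T_def using Vh0[of "p k t"] VI0 by (auto intro!: add_nonneg_nonneg sum_nonneg)
  have "sum T {i, j} \<le> sum T {..<N}"
    by (rule sum_mono2) (use assms T0 in auto)
  then have "T i + T j \<le> sum T {..<N}" using assms(5) by simp
  moreover have "T i \<ge> VI aI rd (p i t - p j t)" using Tl[of j i] assms by auto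
  moreover have "T j \<ge> VI aI rd (p i t - p j t)" using Tl[of i j] assms by (auto simp: VI_def norm_minus_commute)
  moreover have "Phi N \<Omega> rd aI ah p v t = 1/2 * sum T {..<N}" unfolding Phi_def T_def by simp
  ultimately show ?thesis by linarith
qed


lemma Phi_cont:
  fixes \<Omega> :: "vec2 set" and p v gh :: "nat \<Rightarrow> real \<Rightarrow> vec2"
  assumes grad_h: "\<And>i t. i < N \<Longrightarrow> t \<ge> 0 \<Longrightarrow>
        (Vh \<Omega> ah rd has_derivative (\<lambda>h. gh i t \<bullet> h)) (at (p i t))"
    and pos: "\<And>i t. i < N \<Longrightarrow> t \<ge> 0 \<Longrightarrow> (p i has_vector_derivative v i t) (at t within {0..})"
    and vel: "\<And>i t. i < N \<Longrightarrow> t \<ge> 0 \<Longrightarrow> (v i has_vector_derivative dv i t) (at t within {0..})"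
  shows "continuous_on {0..} (\<lambda>s. Phi N \<Omega> rd aI ah p v s)"
proof -
  have pc: "continuous_on {0..} (p i)" if "i < N" for i
    using pos[OF that] by (auto simp: continuous_on_eq_continuous_within intro: has_vector_derivative_continuous)
  have vc: "continuous_on {0..} (v i)" if "i < N" for i
    using vel[OF that] by (auto simp: continuous_on_eq_continuous_within intro: has_vector_derivative_continuous)
  have vic: "continuous_on {0..} (\<lambda>s. VI aI rd (p i s - p j s))" if "i < N" "j < N" for i j
    by (rule continuous_on_compose2[OF VI_cont]) (auto intro!: continuous_intros pc that)
  have hc: "continuous_on {0..} (\<lambda>s. Vh \<Omega> ah rd (p i s))" if "i < N" for i
    unfolding continuous_on_eq_continuous_within
  proof
    fix t :: real assume "t \<in> {0..}"
    then have "isCont (Vh \<Omega> ah rd) (p i t)"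
      using has_derivative_continuous[OF grad_h[OF that]] by auto
    moreover have "continuous (at t within {0..}) (p i)"
      using pc[OF that] \<open>t \<in> {0..}\<close> by (simp add: continuous_on_eq_continuous_within)
    ultimately show "continuous (at t within {0..}) (\<lambda>s. Vh \<Omega> ah rd (p i s))"
      by (rule continuous_within_compose3)
  qed
  show ?thesis unfolding Phi_def
    by (intro continuous_intros continuous_on_sum vc hc vic) auto
qed

theorem proposition3:
  fixes \<Omega> :: "vec2 set" and rd aI ah av cr :: real and N :: nat
    and p v :: "nat \<Rightarrow> real \<Rightarrow> vec2"
    and gh :: "nat \<Rightarrow> real \<Rightarrow> vec2"
  assumes "compact \<Omega>" and "interior \<Omega> \<noteq> {}" and "connected (interior \<Omega>)"
    and "\<Omega> = closure (interior \<Omega>)"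
    and "rd > 0" and "aI > 0" and "ah > 0" and "av > 0" and "cr > 0"
    and grad_h: "\<And>i t. i < N \<Longrightarrow> t \<ge> 0 \<Longrightarrow>
        (Vh \<Omega> ah rd has_derivative (\<lambda>h. gh i t \<bullet> h)) (at (p i t))"
    and pos: "\<And>i t. i < N \<Longrightarrow> t \<ge> 0 \<Longrightarrow>
        (p i has_vector_derivative v i t) (at t within {0..})"
    and vel: "\<And>i t. i < N \<Longrightarrow> t \<ge> 0 \<Longrightarrow>
        (v i has_vector_derivative
           (- (\<Sum>j\<in>{..<N} - {i}. gradVI aI rd (p i t - p j t)) - gh i t - av *\<^sub>R v i t))
        (at t within {0..})"
    and init: "Phi N \<Omega> rd aI ah p v 0 < (LBINT s=ereal rd..ereal cr. fI aI rd s)"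
  shows "\<forall>t\<ge>0. \<forall>i<N. \<forall>j<N. i \<noteq> j \<longrightarrow> cr < norm (p i t - p j t)"
proof (rule ccontr)
  assume "\<not> ?thesis"
  then obtain t1 where t1: "t1 \<ge> 0" "\<exists>i<N. \<exists>j<N. i \<noteq> j \<and> norm (p i t1 - p j t1) \<le> cr"
    by (auto simp: not_less)
  define D where "D = {t\<in>{0..}. \<exists>i<N. \<exists>j<N. i \<noteq> j \<and> norm (p i t - p j t) \<le> cr}"
  have pc: "continuous_on {0..} (p i)" if "i < N" for i
    using pos[OF that] by (auto simp: continuous_on_eq_continuous_within intro: has_vector_derivative_continuous)
  have Deq: "D = (\<Union>i\<in>{..<N}. \<Union>j\<in>{..<N}-{i}. {0..} \<inter> (\<lambda>t. p i t - p j t) -` cball 0 cr)"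
    unfolding D_def by (auto simp: mem_cball_0) blast+
  have "closed D" unfolding Deq
    by (intro closed_UN finite_lessThan finite_Diff ballI continuous_closed_preimage closed_atLeast closed_cball
        continuous_intros pc) auto
  moreover have "D \<noteq> {}" using t1 unfolding D_def by auto
  moreover have bdd: "bdd_below D" unfolding D_def by (rule bdd_belowI[of _ 0]) auto
  ultimately have t0D: "Inf D \<in> D" by (rule closed_contains_Inf[rotated 2])
  define t0 where "t0 = Inf D"
  have t00: "t0 \<ge> 0" using t0D unfolding t0_def D_def by auto
  obtain i j where ij: "i < N" "j < N" "i \<noteq> j" "norm (p i t0 - p j t0) \<le> cr"
    using t0D unfolding t0_def D_def by auto
  have before: "p k s \<noteq> p l s" if "0 \<le> s" "s < t0" "k < N" "l < N" "k \<noteq> l" for s k l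
  proof
    assume "p k s = p l s"
    then have "norm (p k s - p l s) \<le> cr" using \<open>cr > 0\<close> by simp
    then have "s \<in> D" unfolding D_def using that by blast
    then have "t0 \<le> s" unfolding t0_def using bdd by (rule cInf_lower)
    then show False using that by simp
  qed
  have "Phi N \<Omega> rd aI ah p v t0 \<le> Phi N \<Omega> rd aI ah p v 0"
  proof (rule DERIV_nonpos_imp_decreasing_open[OF t00])
    fix x assume x: "0 < x" "x < t0"
    have "((\<lambda>s. Phi N \<Omega> rd aI ah p v s) has_real_derivative (- av * (\<Sum>i<N. v i x \<bullet> v i x))) (at x within {0..})"
    proof (rule Phi_deriv[where gh=gh])
      fix k l assume "k < N" "l < N" "k \<noteq> l"
      then show "p k x \<noteq> p l x" using before[of x k l] x by auto
    next
      fix k assume "k < N" then show "(Vh \<Omega> ah rd has_derivative (\<lambda>h. gh k x \<bullet> h)) (at (p k x))"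
        using x by (intro grad_h) auto
    next
      fix k assume "k < N" then show "(p k has_vector_derivative v k x) (at x within {0..})"
        using x by (intro pos) auto
    next
      fix k assume "k < N" then show "(v k has_vector_derivative
           (- (\<Sum>j\<in>{..<N} - {k}. gradVI aI rd (p k x - p j x)) - gh k x - av *\<^sub>R v k x))
        (at x within {0..})"
        using x by (intro vel) auto
    qed
    moreover have sub: "{0<..} \<subseteq> {(0::real)..}" by auto
    ultimately have "((\<lambda>s. Phi N \<Omega> rd aI ah p v s) has_real_derivative (- av * (\<Sum>i<N. v i x \<bullet> v i x))) (at x within {0<..})"
      by (rule has_field_derivative_subset)
    moreover have eq: "at x within {0<..} = at x" by (rule at_within_open) (use x in auto)
    ultimately have "((\<lambda>s. Phi N \<Omega> rd aI ah p v s) has_real_derivative (- av * (\<Sum>i<N. v i x \<bullet> v i x))) (at x)"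
      by simp
    moreover have "- av * (\<Sum>i<N. v i x \<bullet> v i x) \<le> 0"
      using \<open>av > 0\<close> by (simp add: sum_nonneg mult_nonneg_nonneg)
    ultimately show "\<exists>y. ((\<lambda>s. Phi N \<Omega> rd aI ah p v s) has_real_derivative y) (at x) \<and> y \<le> 0" by blast
  next
    show "continuous_on {0..t0} (\<lambda>s. Phi N \<Omega> rd aI ah p v s)"
      by (rule continuous_on_subset[OF Phi_cont[OF grad_h pos vel]]) auto
  qed
  moreover have "VI aI rd (p i t0 - p j t0) \<le> Phi N \<Omega> rd aI ah p v t0"
    by (rule Phi_lower) (use ij \<open>aI > 0\<close> \<open>ah > 0\<close> in auto)
  moreover have "Gf aI rd cr \<le> VI aI rd (p i t0 - p j t0)"
    unfolding VI_Gf by (rule Gf_antimono) (use ij \<open>aI > 0\<close> in auto)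
  ultimately show False using init unfolding integral_val by linarith
qed

end
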